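(* Let $w(x)=\sup_{\tau}\limsup_{T\to\infty}\mathbb E^x\{\int_0^{\tau\wedge T}f(X_s)\,ds+g(X_{\tau\wedge T})\}$. Assume (B1): for every $x\in E$ there is $d(x)<0$ such that $\gamma(x)=\sup_\tau\limsup_{T\to\infty}\mathbb E^x\{\int_0^{\tau\wedge T}(f(X_s)-d(x))ds\}<\infty$. Then for every $x\in E$, $\varepsilon>0$ and every $\varepsilon$-optimal stopping time $\sigma$ for $w(x)$ with $\mathbb E^x\sigma<\infty$, $$\mathbb E^x\{\sigma\}\le\frac{\gamma(x)+2\|g\|+\varepsilon}{-d(x)}.$$
   Context: $E$ is a locally compact separable metric space in which every closed ball is compact. $(X_t)$ is a right-continuous time-homogeneous (standard) Markov process on $E$ with laws $\mathbb P^x$, expectations $\mathbb E^x$, satisfying the weak Feller property $P_t\mathcal C_0\subseteq\mathcal C_0$ ($P_t\phi(x)=\mathbb E^x\phi(X_t)$, $\mathcal C_0$ continuous bounded functions vanishing at infinity) and ergodicity (a unique probability measure $\mu$ with $\|P_t(x,\cdot)-\mu\|_{TV}\to0$ for all $x$). $f,g$ are continuous and bounded; $\|\cdot\|$ is the sup norm. A stopping time $\sigma$ is $\varepsilon$-optimal for $w(x)$ if the expression inside the supremum is $\ge w(x)-\varepsilon$. *)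

theory Defs
  imports "HOL-Probability.Probability"
begin

text \<open>State space E: a locally compact separable metric space in which every closed ball
  is compact.  E is modelled as a type of class metric_space (so E = UNIV).\<close>
definition state_space_ok :: "'a::metric_space itself \<Rightarrow> bool" where
  "state_space_ok _ \<longleftrightarrow>
     locally compact (UNIV :: 'a set) \<and>
     (\<exists>D::'a set. countable D \<and> closure D = UNIV) \<and>
     (\<forall>(x::'a) r. compact (cball x r))"

definition C0 :: "('a::metric_space \<Rightarrow> real) set" where
  "C0 = {\<phi>. continuous_on UNIV \<phi> \<and> bounded (range \<phi>) \<and>
            (\<forall>e>0. \<exists>K. compact K \<and> (\<forall>x. x \<notin> K \<longrightarrow> \<bar>\<phi> x\<bar> < e))}"

definition trans_op ::
  "('a \<Rightarrow> 'w measure) \<Rightarrow> (real \<Rightarrow> 'w \<Rightarrow> 'a) \<Rightarrow> real \<Rightarrow> ('a \<Rightarrow> real) \<Rightarrow> 'a \<Rightarrow> real" where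
  "trans_op P X t \<phi> x = (\<integral>\<omega>. \<phi> (X t \<omega>) \<partial>P x)"

definition tv_dist :: "'a measure \<Rightarrow> 'a measure \<Rightarrow> real" where
  "tv_dist \<nu> \<mu> = (SUP A\<in>sets \<mu>. \<bar>measure \<nu> A - measure \<mu> A\<bar>)"

definition markov_ok ::
  "'w measure \<Rightarrow> ('a::metric_space \<Rightarrow> 'w measure) \<Rightarrow> (real \<Rightarrow> 'w measure) \<Rightarrow>
   (real \<Rightarrow> 'w \<Rightarrow> 'a) \<Rightarrow> bool" where
  "markov_ok M P F X \<longleftrightarrow>
     \<comment> \<open>laws\<close>
     (\<forall>x. prob_space (P x) \<and> sets (P x) = sets M) \<and>
     (\<forall>B\<in>sets M. (\<lambda>x. emeasure (P x) B) \<in> borel_measurable borel) \<and>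
     (\<forall>x. AE \<omega> in P x. X 0 \<omega> = x) \<and>
     \<comment> \<open>filtration and adaptedness\<close>
     (\<forall>t. space (F t) = space M \<and> sets (F t) \<subseteq> sets M) \<and>
     (\<forall>s t. 0 \<le> s \<longrightarrow> s \<le> t \<longrightarrow> sets (F s) \<subseteq> sets (F t)) \<and>
     (\<forall>t\<ge>0. X t \<in> F t \<rightarrow>\<^sub>M borel) \<and>
     (\<lambda>(s, \<omega>). X s \<omega>) \<in> (lborel \<Otimes>\<^sub>M M) \<rightarrow>\<^sub>M borel \<and>
     \<comment> \<open>right-continuous paths\<close>
     (\<forall>\<omega>\<in>space M. \<forall>t\<ge>0. continuous (at_right t) (\<lambda>s. X s \<omega>)) \<and>
     \<comment> \<open>time-homogeneous Markov property w.r.t. F\<close>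
     (\<forall>x s t \<phi> A. 0 \<le> s \<longrightarrow> 0 \<le> t \<longrightarrow> \<phi> \<in> borel_measurable borel \<longrightarrow>
        bounded (range \<phi>) \<longrightarrow> A \<in> sets (F t) \<longrightarrow>
        (\<integral>\<omega>. indicator A \<omega> * \<phi> (X (t + s) \<omega>) \<partial>P x) =
        (\<integral>\<omega>. indicator A \<omega> * trans_op P X s \<phi> (X t \<omega>) \<partial>P x)) \<and>
     \<comment> \<open>weak Feller property\<close>
     (\<forall>t\<ge>0. \<forall>\<phi>\<in>C0. trans_op P X t \<phi> \<in> C0) \<and>
     \<comment> \<open>ergodicity\<close>
     (\<exists>!\<mu>. prob_space \<mu> \<and> sets \<mu> = sets (borel :: 'a measure) \<and>
        (\<forall>x. ((\<lambda>t. tv_dist (distr (P x) borel (X t)) \<mu>) \<longlongrightarrow> 0) at_top))"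

definition stopping_times :: "'w measure \<Rightarrow> (real \<Rightarrow> 'w measure) \<Rightarrow> ('w \<Rightarrow> ennreal) set" where
  "stopping_times M F = {\<tau>. \<forall>t\<ge>0. {\<omega>\<in>space M. \<tau> \<omega> \<le> ennreal t} \<in> sets (F t)}"

definition stop_min :: "('w \<Rightarrow> ennreal) \<Rightarrow> real \<Rightarrow> 'w \<Rightarrow> real" where
  "stop_min \<tau> T \<omega> = enn2real (min (\<tau> \<omega>) (ennreal T))"

definition payoff ::
  "('a \<Rightarrow> 'w measure) \<Rightarrow> (real \<Rightarrow> 'w \<Rightarrow> 'a) \<Rightarrow> ('a \<Rightarrow> real) \<Rightarrow> ('a \<Rightarrow> real) \<Rightarrow>
   'a \<Rightarrow> ('w \<Rightarrow> ennreal) \<Rightarrow> real \<Rightarrow> real" where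
  "payoff P X h k x \<tau> T =
     (\<integral>\<omega>. (LINT s:{0..stop_min \<tau> T \<omega>}|lborel. h (X s \<omega>)) + k (X (stop_min \<tau> T \<omega>) \<omega>) \<partial>P x)"

definition value_fn ::
  "'w measure \<Rightarrow> ('a \<Rightarrow> 'w measure) \<Rightarrow> (real \<Rightarrow> 'w measure) \<Rightarrow> (real \<Rightarrow> 'w \<Rightarrow> 'a) \<Rightarrow>
   ('a \<Rightarrow> real) \<Rightarrow> ('a \<Rightarrow> real) \<Rightarrow> 'a \<Rightarrow> ereal" where
  "value_fn M P F X h k x =
     (SUP \<tau>\<in>stopping_times M F. Limsup at_top (\<lambda>T. ereal (payoff P X h k x \<tau> T)))"

definition sup_norm :: "('a \<Rightarrow> real) \<Rightarrow> real" where
  "sup_norm g = (SUP y. \<bar>g y\<bar>)"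

end

theory Submission
  imports Defs
begin

lemma st_meas:
  assumes "\<tau> \<in> stopping_times M F" "\<forall>t. space (F t) = space M \<and> sets (F t) \<subseteq> sets M"
  shows "\<tau> \<in> borel_measurable M"
proof (rule borel_measurableI_le)
  fix y :: ennreal
  show "{x \<in> space M. \<tau> x \<le> y} \<in> sets M"
  proof (cases y)
    case (real r)
    then have "{x \<in> space M. \<tau> x \<le> y} \<in> sets (F r)" using assms(1) unfolding stopping_times_def by auto
    then show ?thesis using assms(2) by auto
  next
    case top then show ?thesis by simp
  qed
qed

lemma sm_meas:
  assumes "\<tau> \<in> borel_measurable M"
  shows "stop_min \<tau> T \<in> borel_measurable M"
  unfolding stop_min_def using assms by measurable

lemma int_meas:
  fixes X :: "real \<Rightarrow> 'w \<Rightarrow> 'a::topological_space" and c :: "'w \<Rightarrow> real"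
  assumes c: "c \<in> borel_measurable M" and h: "h \<in> borel_measurable borel"
    and J: "(\<lambda>(s, \<omega>). X s \<omega>) \<in> (lborel \<Otimes>\<^sub>M M) \<rightarrow>\<^sub>M borel"
  shows "(\<lambda>\<omega>. LINT s:{0..c \<omega>}|lborel. (h (X s \<omega>) :: real)) \<in> borel_measurable M"
proof -
  have J2: "(\<lambda>(\<omega>, s). X s \<omega>) \<in> (M \<Otimes>\<^sub>M lborel) \<rightarrow>\<^sub>M borel"
    using measurable_compose[OF measurable_pair_swap' J] by (simp add: case_prod_beta)
  have hJ: "(\<lambda>(\<omega>, s). h (X s \<omega>)) \<in> (M \<Otimes>\<^sub>M lborel) \<rightarrow>\<^sub>M borel"
    using measurable_compose[OF J2 h] by (simp add: case_prod_beta)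
  have "(\<lambda>p. indicator {0..c (fst p)} (snd p) * h (X (snd p) (fst p))) \<in> borel_measurable (M \<Otimes>\<^sub>M lborel)"
  proof -
    have hJ': "(\<lambda>p. h (X (snd p) (fst p))) \<in> borel_measurable (M \<Otimes>\<^sub>M lborel)"
      using hJ by (simp add: case_prod_beta)
    have "(\<lambda>p. (if 0 \<le> snd p \<and> snd p \<le> c (fst p) then 1 else 0) * h (X (snd p) (fst p)) :: real) \<in> borel_measurable (M \<Otimes>\<^sub>M lborel)"
    proof -
      have sn: "(snd :: 'w \<times> real \<Rightarrow> real) \<in> borel_measurable (M \<Otimes>\<^sub>M lborel)"
        using measurable_snd[of M lborel] by (simp add: measurable_lborel2)
      have cf: "(\<lambda>p. c (fst p)) \<in> borel_measurable (M \<Otimes>\<^sub>M lborel)"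
        using measurable_compose[OF measurable_fst c] .
      have s1: "{p \<in> space (M \<Otimes>\<^sub>M lborel). (\<lambda>_. 0::real) p \<le> snd p} \<in> sets (M \<Otimes>\<^sub>M lborel)"
        by (rule borel_measurable_le) (auto intro: sn)
      have s2: "{p \<in> space (M \<Otimes>\<^sub>M lborel). snd p \<le> c (fst p)} \<in> sets (M \<Otimes>\<^sub>M lborel)"
        by (rule borel_measurable_le[OF sn cf])
      have "{p \<in> space (M \<Otimes>\<^sub>M lborel). 0 \<le> snd p \<and> snd p \<le> c (fst p)} \<in> sets (M \<Otimes>\<^sub>M lborel)"
      proof -
        have "{p \<in> space (M \<Otimes>\<^sub>M lborel). 0 \<le> snd p \<and> snd p \<le> c (fst p)} = {p \<in> space (M \<Otimes>\<^sub>M lborel). (\<lambda>_. 0::real) p \<le> snd p} \<inter> {p \<in> space (M \<Otimes>\<^sub>M lborel). snd p \<le> c (fst p)}" by auto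
        then show ?thesis using sets.Int[OF s1 s2] by simp
      qed
      then show ?thesis
        by (intro borel_measurable_times measurable_If) (auto simp: hJ')
    qed
    then show ?thesis by (simp add: indicator_def of_bool_def)
  qed
  then have "case_prod (\<lambda>\<omega> s. indicator {0..c \<omega>} s *\<^sub>R h (X s \<omega>)) \<in> borel_measurable (M \<Otimes>\<^sub>M lborel)"
    by (simp add: case_prod_beta)
  from lborel.borel_measurable_lebesgue_integral[OF this]
  show ?thesis unfolding set_lebesgue_integral_def .
qed

lemma end_meas:
  fixes X :: "real \<Rightarrow> 'w \<Rightarrow> 'a::topological_space" and c :: "'w \<Rightarrow> real"
  assumes c: "c \<in> borel_measurable M" and h: "h \<in> borel_measurable borel"
    and J: "(\<lambda>(s, \<omega>). X s \<omega>) \<in> (lborel \<Otimes>\<^sub>M M) \<rightarrow>\<^sub>M borel"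
  shows "(\<lambda>\<omega>. (h (X (c \<omega>) \<omega>) :: real)) \<in> borel_measurable M"
proof -
  have "(\<lambda>\<omega>. (c \<omega>, \<omega>)) \<in> M \<rightarrow>\<^sub>M (lborel \<Otimes>\<^sub>M M)"
    using c by (intro measurable_Pair) (auto simp: measurable_lborel2)
  from measurable_compose[OF measurable_compose[OF this J] h] show ?thesis by simp
qed

lemma sect_meas:
  fixes X :: "real \<Rightarrow> 'w \<Rightarrow> 'a::topological_space"
  assumes J: "(\<lambda>(s, \<omega>). X s \<omega>) \<in> (lborel \<Otimes>\<^sub>M M) \<rightarrow>\<^sub>M borel" and w: "\<omega> \<in> space M"
    and h: "h \<in> borel_measurable borel"
  shows "(\<lambda>s. (h (X s \<omega>) :: real)) \<in> borel_measurable lborel"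
proof -
  have "(\<lambda>s. (s, \<omega>)) \<in> lborel \<rightarrow>\<^sub>M (lborel \<Otimes>\<^sub>M M)"
    using w by (intro measurable_Pair) auto
  from measurable_compose[OF measurable_compose[OF this J] h] show ?thesis by simp
qed

lemma fin_Icc: "emeasure lborel {0..c::real} < \<top>"
  by (cases "0 \<le> c") (auto simp: emeasure_lborel_Icc)

lemma sect_int:
  fixes X :: "real \<Rightarrow> 'w \<Rightarrow> 'a::topological_space"
  assumes J: "(\<lambda>(s, \<omega>). X s \<omega>) \<in> (lborel \<Otimes>\<^sub>M M) \<rightarrow>\<^sub>M borel" and w: "\<omega> \<in> space M"
    and h: "h \<in> borel_measurable borel" and B: "\<And>y. \<bar>h y\<bar> \<le> B"
  shows "set_integrable lborel {0..c} (\<lambda>s. (h (X s \<omega>) :: real))"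
  unfolding set_integrable_def
  by (rule integrableI_bounded_set_indicator[where B=B]) (insert sect_meas[OF J w h], auto simp: B fin_Icc)

lemma sect_bound:
  fixes X :: "real \<Rightarrow> 'w \<Rightarrow> 'a::topological_space"
  assumes J: "(\<lambda>(s, \<omega>). X s \<omega>) \<in> (lborel \<Otimes>\<^sub>M M) \<rightarrow>\<^sub>M borel" and w: "\<omega> \<in> space M"
    and h: "h \<in> borel_measurable borel" and B: "\<And>y. \<bar>h y\<bar> \<le> B" and c: "0 \<le> c"
  shows "\<bar>LINT s:{0..c}|lborel. (h (X s \<omega>) :: real)\<bar> \<le> B * c"
proof -
  have i: "integrable lborel (\<lambda>s. indicator {0..c} s *\<^sub>R h (X s \<omega>))"
    using sect_int[OF J w h B, of c] unfolding set_integrable_def .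
  have i2: "integrable lborel (\<lambda>s. indicator {0..c} s *\<^sub>R B)"
    by (rule integrableI_bounded_set_indicator[where B="\<bar>B\<bar>"]) (use c in \<open>auto simp: emeasure_lborel_Icc\<close>)
  have "\<bar>LINT s:{0..c}|lborel. h (X s \<omega>)\<bar> \<le> (LINT s|lborel. norm (indicator {0..c} s *\<^sub>R h (X s \<omega>)))"
    unfolding set_lebesgue_integral_def using integral_norm_bound by (metis real_norm_def)
  also have "\<dots> \<le> (LINT s|lborel. indicator {0..c} s *\<^sub>R B)"
    by (intro integral_mono i2 integrable_norm[OF i]) (auto simp: B indicator_def)
  also have "\<dots> = B * c" using c by (simp add: mult.commute)
  finally show ?thesis .
qed

lemma sect_diff:
  fixes X :: "real \<Rightarrow> 'w \<Rightarrow> 'a::topological_space"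
  assumes J: "(\<lambda>(s, \<omega>). X s \<omega>) \<in> (lborel \<Otimes>\<^sub>M M) \<rightarrow>\<^sub>M borel" and w: "\<omega> \<in> space M"
    and h: "h \<in> borel_measurable borel" and B: "\<And>y. \<bar>h y\<bar> \<le> B" and c: "0 \<le> c"
  shows "(LINT s:{0..c}|lborel. (h (X s \<omega>) - k :: real)) = (LINT s:{0..c}|lborel. h (X s \<omega>)) - k * c"
proof -
  have k: "set_integrable lborel {0..c} (\<lambda>s. k)"
    unfolding set_integrable_def
    by (rule integrableI_bounded_set_indicator[where B="\<bar>k\<bar>"]) (use c in \<open>auto simp: emeasure_lborel_Icc\<close>)
  have "(LINT s:{0..c}|lborel. (h (X s \<omega>) - k)) = (LINT s:{0..c}|lborel. h (X s \<omega>)) - (LINT s:{0..c}|lborel. k)"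
    by (rule set_integral_diff(2)[OF sect_int[OF J w h B] k])
  also have "(LINT s:{0..c}|lborel. k) = k * c" using c by (simp add: set_integral_const)
  finally show ?thesis .
qed

lemma sm_nonneg: "0 \<le> stop_min \<tau> T \<omega>"
  unfolding stop_min_def by simp

lemma sm_ennreal: "0 \<le> T \<Longrightarrow> ennreal (stop_min \<tau> T \<omega>) = min (\<tau> \<omega>) (ennreal T)"
  unfolding stop_min_def by (intro ennreal_enn2real) (auto simp: min_less_iff_disj)

lemma sm_le: "0 \<le> T \<Longrightarrow> stop_min \<tau> T \<omega> \<le> T"
  unfolding stop_min_def by (rule enn2real_leI) auto

lemma sm_mono: "0 \<le> S \<Longrightarrow> S \<le> T \<Longrightarrow> stop_min \<tau> S \<omega> \<le> stop_min \<tau> T \<omega>"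
  unfolding stop_min_def
  by (rule enn2real_mono) (auto simp: min_less_iff_disj min.coboundedI2 intro: min.mono)

lemma SUP_min_nat: "(SUP n::nat. min (a::ennreal) (of_nat n)) = a"
proof (rule antisym)
  show "(SUP n::nat. min a (of_nat n)) \<le> a" by (rule SUP_least) simp
  show "a \<le> (SUP n::nat. min a (of_nat n))"
  proof (cases "a = top")
    case True
    have "(SUP n::nat. min a (of_nat n)) = (SUP n::nat. (of_nat n::ennreal))" using True by simp
    also have "\<dots> = top" by (rule ennreal_SUP_of_nat_eq_top)
    finally show ?thesis using True by (metis order.refl)
  next
    case False
    then obtain n where "a < of_nat n" using ennreal_Ex_less_of_nat top.not_eq_extremum by blast
    then have "min a (of_nat n) = a" by simp
    then show ?thesis by (metis SUP_upper UNIV_I)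
  qed
qed

theorem lemma2p5:
  fixes M :: "'w measure" and P :: "'a::metric_space \<Rightarrow> 'w measure"
    and F :: "real \<Rightarrow> 'w measure" and X :: "real \<Rightarrow> 'w \<Rightarrow> 'a"
    and f g :: "'a \<Rightarrow> real" and d :: "'a \<Rightarrow> real"
    and x :: 'a and \<epsilon> :: real and \<sigma> :: "'w \<Rightarrow> ennreal"
  assumes E: "state_space_ok TYPE('a)"
    and Mk: "markov_ok M P F X"
    and f: "continuous_on UNIV f" "bounded (range f)"
    and g: "continuous_on UNIV g" "bounded (range g)"
    and B1: "\<forall>y. d y < 0 \<and> value_fn M P F X (\<lambda>z. f z - d y) (\<lambda>_. 0) y < \<infinity>"
    and eps: "\<epsilon> > 0"
    and \<sigma>: "\<sigma> \<in> stopping_times M F"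
    and opt: "Limsup at_top (\<lambda>T. ereal (payoff P X f g x \<sigma> T))
                \<ge> value_fn M P F X f g x - ereal \<epsilon>"
    and fin: "(\<integral>\<^sup>+ \<omega>. \<sigma> \<omega> \<partial>P x) < \<infinity>"
  shows "ereal (enn2real (\<integral>\<^sup>+ \<omega>. \<sigma> \<omega> \<partial>P x))
           \<le> (value_fn M P F X (\<lambda>z. f z - d x) (\<lambda>_. 0) x + ereal (2 * sup_norm g + \<epsilon>))
              / ereal (- d x)"
proof -
  have PS: "prob_space (P x)" and sPM: "sets (P x) = sets M" using Mk unfolding markov_ok_def by auto
  interpret p: prob_space "P x" by (rule PS)
  have spP: "space (P x) = space M" by (rule sets_eq_imp_space_eq[OF sPM])
  have AE0: "AE \<omega> in P x. X 0 \<omega> = x" using Mk unfolding markov_ok_def by auto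
  have FM: "\<forall>t. space (F t) = space M \<and> sets (F t) \<subseteq> sets M" using Mk unfolding markov_ok_def by auto
  have J: "(\<lambda>(s, \<omega>). X s \<omega>) \<in> (lborel \<Otimes>\<^sub>M M) \<rightarrow>\<^sub>M borel" using Mk unfolding markov_ok_def by auto
  have fm: "f \<in> borel_measurable borel" by (rule borel_measurable_continuous_onI[OF f(1)])
  have gm: "g \<in> borel_measurable borel" by (rule borel_measurable_continuous_onI[OF g(1)])
  obtain Bf where Bf: "\<And>y. \<bar>f y\<bar> \<le> Bf" using f(2) unfolding bounded_iff by auto
  obtain Bg where Bg: "\<And>y. \<bar>g y\<bar> \<le> Bg" using g(2) unfolding bounded_iff by auto
  have G: "\<And>y. \<bar>g y\<bar> \<le> sup_norm g"
    unfolding sup_norm_def by (rule cSUP_upper) (auto intro!: bdd_aboveI[where M=Bg] simp: Bg)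
  have \<sigma>m: "\<sigma> \<in> borel_measurable M" by (rule st_meas[OF \<sigma> FM])
  define c where "c T = stop_min \<sigma> T" for T
  have cm: "c T \<in> borel_measurable M" for T unfolding c_def by (rule sm_meas[OF \<sigma>m])
  define A where "A T \<omega> = (LINT s:{0..c T \<omega>}|lborel. f (X s \<omega>))" for T \<omega>
  define Ge where "Ge T \<omega> = g (X (c T \<omega>) \<omega>)" for T \<omega>
  have PM: "measurable (P x) N = measurable M N" for N :: "real measure"
    by (rule measurable_cong_sets[OF sPM refl])
  have Am: "A T \<in> borel_measurable (P x)" for T
    unfolding PM A_def by (rule int_meas[OF cm fm J])
  have Gm: "Ge T \<in> borel_measurable (P x)" for T
    unfolding PM Ge_def by (rule end_meas[OF cm gm J])
  have cmP: "c T \<in> borel_measurable (P x)" for T unfolding PM by (rule cm)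
  have Ai: "integrable (P x) (A T)" if T0: "0 \<le> T" for T
  proof (rule p.integrable_const_bound[where B="Bf * T"])
    show "AE \<omega> in P x. norm (A T \<omega>) \<le> Bf * T"
    proof (rule AE_I2)
      fix \<omega> assume "\<omega> \<in> space (P x)"
      then have w: "\<omega> \<in> space M" using spP by simp
      have "\<bar>A T \<omega>\<bar> \<le> Bf * c T \<omega>" unfolding A_def
        by (rule sect_bound[OF J w fm Bf]) (simp add: c_def sm_nonneg)
      also have "\<dots> \<le> Bf * T"
        using Bf[of undefined] sm_le[OF T0, of \<sigma> \<omega>] unfolding c_def
        by (intro mult_left_mono) auto
      finally show "norm (A T \<omega>) \<le> Bf * T" by simp
    qed
  qed (rule Am)
  have Gi: "integrable (P x) (Ge T)" for T
    by (rule p.integrable_const_bound[where B="sup_norm g"]) (auto simp: Ge_def G Gm)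
  have ci: "integrable (P x) (c T)" if T0: "0 \<le> T" for T
    by (rule p.integrable_const_bound[where B="T"]) (auto simp: c_def sm_nonneg sm_le[OF T0] cmP[unfolded c_def])
  have pay1: "payoff P X f g x \<sigma> T = integral\<^sup>L (P x) (A T) + integral\<^sup>L (P x) (Ge T)" if T0: "0 \<le> T" for T
    unfolding payoff_def A_def[symmetric, unfolded c_def] Ge_def[symmetric, unfolded c_def]
    by (rule Bochner_Integration.integral_add[OF Ai[OF T0] Gi])
  have pay2: "payoff P X (\<lambda>z. f z - d x) (\<lambda>_. 0) x \<sigma> T = integral\<^sup>L (P x) (A T) - d x * integral\<^sup>L (P x) (c T)"
    if T0: "0 \<le> T" for T
  proof -
    have "payoff P X (\<lambda>z. f z - d x) (\<lambda>_. 0) x \<sigma> T = (\<integral>\<omega>. A T \<omega> - d x * c T \<omega> \<partial>P x)"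
      unfolding payoff_def
    proof (rule Bochner_Integration.integral_cong[OF refl])
      fix \<omega> assume "\<omega> \<in> space (P x)"
      then have w: "\<omega> \<in> space M" using spP by simp
      show "(LINT s:{0..stop_min \<sigma> T \<omega>}|lborel. f (X s \<omega>) - d x) + 0 = A T \<omega> - d x * c T \<omega>"
        unfolding A_def c_def by (simp add: sect_diff[OF J w fm Bf sm_nonneg])
    qed
    also have "\<dots> = integral\<^sup>L (P x) (A T) - d x * integral\<^sup>L (P x) (c T)"
      using Ai[OF T0] ci[OF T0] by simp
    finally show ?thesis .
  qed
  have EG: "integral\<^sup>L (P x) (Ge T) \<le> sup_norm g" for T
  proof -
    have "integral\<^sup>L (P x) (Ge T) \<le> (\<integral>\<omega>. sup_norm g \<partial>P x)"
      by (rule integral_mono[OF Gi]) (auto simp: Ge_def intro: order.trans[OF abs_ge_self G])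
    then show ?thesis by (simp add: p.prob_space)
  qed
  have cmono: "integral\<^sup>L (P x) (c S) \<le> integral\<^sup>L (P x) (c T)" if "0 \<le> S" "S \<le> T" for S T
    by (rule integral_mono[OF ci ci]) (use that in \<open>auto simp: c_def intro: sm_mono\<close>)
  define \<gamma> where "\<gamma> = value_fn M P F X (\<lambda>z. f z - d x) (\<lambda>_. 0) x"
  define L where "L = Limsup at_top (\<lambda>T. ereal (payoff P X f g x \<sigma> T))"
  have dneg: "d x < 0" and \<gamma>fin: "\<gamma> < \<infinity>" using B1 unfolding \<gamma>_def by auto
  have L\<gamma>: "Limsup at_top (\<lambda>T. ereal (payoff P X (\<lambda>z. f z - d x) (\<lambda>_. 0) x \<sigma> T)) \<le> \<gamma>"
    unfolding \<gamma>_def value_fn_def by (rule SUP_upper[OF \<sigma>])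
  have key: "L \<le> \<gamma> + ereal (d x * integral\<^sup>L (P x) (c (real n)) + sup_norm g)" for n :: nat
  proof -
    have ev: "eventually (\<lambda>T. ereal (payoff P X f g x \<sigma> T) \<le>
        ereal (payoff P X (\<lambda>z. f z - d x) (\<lambda>_. 0) x \<sigma> T) + ereal (d x * integral\<^sup>L (P x) (c (real n)) + sup_norm g)) at_top"
      using eventually_ge_at_top[of "real n"]
    proof (rule eventually_mono)
      fix T assume nT: "real n \<le> T"
      then have T0: "0 \<le> T" by simp
      have "d x * integral\<^sup>L (P x) (c T) \<le> d x * integral\<^sup>L (P x) (c (real n))"
        using cmono[OF _ nT] dneg by (intro mult_left_mono_neg) auto
      then show "ereal (payoff P X f g x \<sigma> T) \<le>
        ereal (payoff P X (\<lambda>z. f z - d x) (\<lambda>_. 0) x \<sigma> T) + ereal (d x * integral\<^sup>L (P x) (c (real n)) + sup_norm g)"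
        using pay1[OF T0] pay2[OF T0] EG[of T] by simp
    qed
    have "L \<le> Limsup at_top (\<lambda>T. ereal (payoff P X (\<lambda>z. f z - d x) (\<lambda>_. 0) x \<sigma> T) + ereal (d x * integral\<^sup>L (P x) (c (real n)) + sup_norm g))"
      unfolding L_def by (rule Limsup_mono[OF ev])
    also have "\<dots> = Limsup at_top (\<lambda>T. ereal (payoff P X (\<lambda>z. f z - d x) (\<lambda>_. 0) x \<sigma> T)) + ereal (d x * integral\<^sup>L (P x) (c (real n)) + sup_norm g)"
      by (rule Limsup_add_ereal_right) auto
    also have "\<dots> \<le> \<gamma> + ereal (d x * integral\<^sup>L (P x) (c (real n)) + sup_norm g)"
      by (rule add_right_mono[OF L\<gamma>])
    finally show ?thesis .
  qed
  have w0: "ereal (g x) \<le> value_fn M P F X f g x"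
  proof -
    have z: "(\<lambda>_. 0::ennreal) \<in> stopping_times M F"
      unfolding stopping_times_def proof (intro CollectI allI impI) fix t :: real show "{\<omega> \<in> space M. (\<lambda>_. 0::ennreal) \<omega> \<le> ennreal t} \<in> sets (F t)" using sets.top[of "F t"] FM by simp qed
    have pz: "payoff P X f g x (\<lambda>_. 0) T = g x" for T
    proof -
      have s0: "stop_min (\<lambda>_. 0) T \<omega> = 0" for \<omega> unfolding stop_min_def by simp
      have l0: "(LINT s:{0..0}|lborel. f (X s \<omega>)) = 0" for \<omega>
        unfolding set_lebesgue_integral_def
        by (rule integral_eq_zero_AE) (rule eventually_mono[OF AE_lborel_singleton[of 0]], auto)
      have "payoff P X f g x (\<lambda>_. 0) T = (\<integral>\<omega>. g (X 0 \<omega>) \<partial>P x)"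
        unfolding payoff_def s0 l0 by simp
      also have "\<dots> = (\<integral>\<omega>. g x \<partial>P x)"
        by (rule integral_cong_AE) (use AE0 end_meas[OF _ gm J, of "\<lambda>_. 0"] in \<open>auto simp: PM\<close>)
      also have "\<dots> = g x" by (simp add: p.prob_space)
      finally show ?thesis .
    qed
    have "Limsup at_top (\<lambda>T. ereal (payoff P X f g x (\<lambda>_. 0) T)) = ereal (g x)"
      unfolding pz by (rule Limsup_const) simp
    moreover have "Limsup at_top (\<lambda>T. ereal (payoff P X f g x (\<lambda>_. 0) T)) \<le> value_fn M P F X f g x"
      unfolding value_fn_def by (rule SUP_upper[OF z])
    ultimately show ?thesis by simp
  qed
  have low: "ereal (- sup_norm g - \<epsilon>) \<le> L"
  proof -
    have "ereal (- sup_norm g - \<epsilon>) \<le> ereal (g x) - ereal \<epsilon>" using G[of x] by simp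
    also have "\<dots> \<le> value_fn M P F X f g x - ereal \<epsilon>" by (rule ereal_minus_mono[OF w0 order.refl])
    also have "\<dots> \<le> L" unfolding L_def by (rule opt)
    finally show ?thesis .
  qed
  have comb: "ereal (- sup_norm g - \<epsilon>) \<le> \<gamma> + ereal (d x * integral\<^sup>L (P x) (c (real n)) + sup_norm g)" for n :: nat
    using low key[of n] by (rule order.trans)
  obtain r where r: "\<gamma> = ereal r"
    using comb[of 0] \<gamma>fin by (cases \<gamma>) auto
  define K where "K = (r + (2 * sup_norm g + \<epsilon>)) / (- d x)"
  have cK: "integral\<^sup>L (P x) (c (real n)) \<le> K" for n :: nat
  proof -
    have "- sup_norm g - \<epsilon> \<le> r + (d x * integral\<^sup>L (P x) (c (real n)) + sup_norm g)"
      using comb[of n] unfolding r by simp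
    then have "integral\<^sup>L (P x) (c (real n)) * (- d x) \<le> r + (2 * sup_norm g + \<epsilon>)"
      by (simp add: algebra_simps)
    then show ?thesis unfolding K_def using dneg by (subst pos_le_divide_eq) auto
  qed
  have K0: "0 \<le> K"
  proof -
    have "0 \<le> integral\<^sup>L (P x) (c (real 0))"
      by (rule integral_nonneg_AE) (simp add: c_def sm_nonneg)
    then show ?thesis using cK[of 0] by linarith
  qed
  have nnc: "(\<integral>\<^sup>+ \<omega>. min (\<sigma> \<omega>) (of_nat n) \<partial>P x) = ennreal (integral\<^sup>L (P x) (c (real n)))" for n :: nat
  proof -
    have "(\<integral>\<^sup>+ \<omega>. min (\<sigma> \<omega>) (of_nat n) \<partial>P x) = (\<integral>\<^sup>+ \<omega>. ennreal (c (real n) \<omega>) \<partial>P x)"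
      by (simp add: c_def sm_ennreal ennreal_of_nat_eq_real_of_nat)
    also have "\<dots> = ennreal (integral\<^sup>L (P x) (c (real n)))"
      by (rule nn_integral_eq_integral[OF ci]) (auto simp: c_def sm_nonneg)
    finally show ?thesis .
  qed
  have \<sigma>mP: "\<sigma> \<in> borel_measurable (P x)" using \<sigma>m measurable_cong_sets[OF sPM refl] by blast
  have "(\<integral>\<^sup>+ \<omega>. \<sigma> \<omega> \<partial>P x) = (\<integral>\<^sup>+ \<omega>. (SUP n::nat. min (\<sigma> \<omega>) (of_nat n)) \<partial>P x)"
    by (simp add: SUP_min_nat)
  also have "\<dots> = (SUP n::nat. (\<integral>\<^sup>+ \<omega>. min (\<sigma> \<omega>) (of_nat n) \<partial>P x))"
  proof (rule nn_integral_monotone_convergence_SUP)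
    show "incseq (\<lambda>n \<omega>. min (\<sigma> \<omega>) (of_nat n :: ennreal))"
      by (auto simp: incseq_def le_fun_def intro: min.coboundedI2 order.trans[OF _ of_nat_mono])
    show "(\<lambda>\<omega>. min (\<sigma> \<omega>) (of_nat n)) \<in> borel_measurable (P x)" for n
      using \<sigma>mP by measurable
  qed
  also have "\<dots> \<le> ennreal K"
    by (rule SUP_least) (simp add: nnc cK ennreal_leI)
  finally have "enn2real (\<integral>\<^sup>+ \<omega>. \<sigma> \<omega> \<partial>P x) \<le> K" by (rule enn2real_leI[OF K0])
  moreover have "(\<gamma> + ereal (2 * sup_norm g + \<epsilon>)) / ereal (- d x) = ereal K"
    unfolding r K_def using dneg by simp
  ultimately show ?thesis unfolding \<gamma>_def by simp
qed

end
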